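(* Let $G$ be a connected graph containing a cycle. Then the intersection of any (possibly infinite) family of pre-cycle cores of $G$ is again a pre-cycle core of $G$. Consequently, $G$ has a unique minimal pre-cycle core.
   Context: Graphs are simple and unoriented, possibly infinite. A cycle in $G$ is a closed path $(x_0,\dots,x_n=x_0)$ with no repeated vertices except $x_0=x_n$ and no edges $(x_i,x_j)$ of $G$ with $i-j\not\equiv0,\pm1\pmod n$. A pre-cycle core of $G$ is a subset $I\subseteq V(G)$ such that $G|_I$ is connected and contains all cycles of $G$. *)

theory Defs
  imports Main
begin

definition simple_graph :: "'a set \<Rightarrow> ('a \<Rightarrow> 'a \<Rightarrow> bool) \<Rightarrow> bool" where
  "simple_graph V E \<longleftrightarrow> (\<forall>x y. E x y \<longrightarrow> x \<in> V \<and> y \<in> V) \<and>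
     (\<forall>x y. E x y \<longrightarrow> E y x) \<and> (\<forall>x. \<not> E x x)"

definition connected_on :: "'a set \<Rightarrow> ('a \<Rightarrow> 'a \<Rightarrow> bool) \<Rightarrow> 'a set \<Rightarrow> bool" where
  "connected_on V E S \<longleftrightarrow> S \<subseteq> V \<and> S \<noteq> {} \<and>
     (\<forall>x\<in>S. \<forall>y\<in>S. (\<lambda>u v. u \<in> S \<and> v \<in> S \<and> E u v)\<^sup>*\<^sup>* x y)"

text \<open>A cycle (x_0,...,x_n = x_0), n \<ge> 3: closed path, no repeated vertices except
x_0 = x_n, and no chords (edges x_i x_j with i - j not congruent to 0, 1, -1 mod n).\<close>
definition is_cycle :: "'a set \<Rightarrow> ('a \<Rightarrow> 'a \<Rightarrow> bool) \<Rightarrow> nat \<Rightarrow> (nat \<Rightarrow> 'a) \<Rightarrow> bool" where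
  "is_cycle V E n x \<longleftrightarrow> 3 \<le> n \<and> (\<forall>i\<le>n. x i \<in> V) \<and> x n = x 0 \<and>
     (\<forall>i<n. E (x i) (x (Suc i))) \<and> inj_on x {..<n} \<and>
     (\<forall>i\<le>n. \<forall>j\<le>n. E (x i) (x j) \<longrightarrow>
        (int i - int j) mod int n \<in> {0, 1, int n - 1})"

definition has_cycle :: "'a set \<Rightarrow> ('a \<Rightarrow> 'a \<Rightarrow> bool) \<Rightarrow> bool" where
  "has_cycle V E \<longleftrightarrow> (\<exists>n x. is_cycle V E n x)"

definition pre_cycle_core :: "'a set \<Rightarrow> ('a \<Rightarrow> 'a \<Rightarrow> bool) \<Rightarrow> 'a set \<Rightarrow> bool" where
  "pre_cycle_core V E I \<longleftrightarrow> I \<subseteq> V \<and> connected_on V E I \<and>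
     (\<forall>n x. is_cycle V E n x \<longrightarrow> x ` {0..n} \<subseteq> I)"

end

theory Submission
  imports Defs
begin

lemma rtranclp_walk:
  assumes "R\<^sup>*\<^sup>* x y"
  shows "\<exists>p. p \<noteq> [] \<and> hd p = x \<and> last p = y \<and> successively R p"
  using assms
proof (induction rule: converse_rtranclp_induct)
  case base
  then show ?case by (intro exI[of _ "[y]"]) auto
next
  case (step u v)
  then obtain p where "p \<noteq> [] \<and> hd p = v \<and> last p = y \<and> successively R p" by blast
  then show ?case using step.hyps(1) by (intro exI[of _ "u # p"]) (auto simp: successively_Cons)
qed

lemma walk_distinct:
  "p \<noteq> [] \<Longrightarrow> successively R p \<Longrightarrow>
   \<exists>q. q \<noteq> [] \<and> hd q = hd p \<and> last q = last p \<and> successively R q \<and> distinct q \<and> set q \<subseteq> set p"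
proof (induction "length p" arbitrary: p rule: less_induct)
  case less
  show ?case
  proof (cases "distinct p")
    case True
    then show ?thesis using less.prems by blast
  next
    case False
    then obtain xs ys zs y where p: "p = xs @ [y] @ ys @ [y] @ zs"
      using not_distinct_decomp by blast
    let ?p = "xs @ [y] @ zs"
    have "successively R ?p" using less.prems(2) unfolding p
      by (auto simp: successively_append_iff successively_Cons split: if_splits)
    moreover have "length ?p < length p" using p by simp
    moreover have "?p \<noteq> []" by simp
    ultimately obtain q where "q \<noteq> [] \<and> hd q = hd ?p \<and> last q = last ?p \<and> successively R q \<and> distinct q \<and> set q \<subseteq> set ?p"
      using less.hyps by blast
    moreover have "hd ?p = hd p" "last ?p = last p" "set ?p \<subseteq> set p" using p
      by (cases xs; auto)+
    ultimately show ?thesis by (metis order_trans)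
  qed
qed

lemma walk_set:
  "successively (\<lambda>u v. u \<in> S \<and> v \<in> S \<and> E u v) p \<Longrightarrow> p \<noteq> [] \<Longrightarrow> hd p \<in> S \<Longrightarrow> set p \<subseteq> S"
  by (induction p rule: induct_list012) auto

lemma walk_rtranclp:
  "successively R p \<Longrightarrow> p \<noteq> [] \<Longrightarrow> R\<^sup>*\<^sup>* (hd p) (last p)"
  by (induction p rule: induct_list012) auto

definition lcycle :: "('a \<Rightarrow> 'a \<Rightarrow> bool) \<Rightarrow> 'a list \<Rightarrow> bool" where
  "lcycle E cs \<longleftrightarrow> 3 \<le> length cs \<and> distinct cs \<and> successively E cs \<and> E (last cs) (hd cs)"

lemma lcycle_split:
  assumes sg: "simple_graph V E" and c: "lcycle E cs" and ij: "i < j" "j < length cs"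
    and ch: "E (cs!i) (cs!j)" "2 \<le> j - i" "j - i \<noteq> length cs - 1"
  shows "lcycle E (take (j-i+1) (drop i cs)) \<and> lcycle E (drop j cs @ take (i+1) cs)
    \<and> length (take (j-i+1) (drop i cs)) < length cs \<and> length (drop j cs @ take (i+1) cs) < length cs
    \<and> set cs \<subseteq> set (take (j-i+1) (drop i cs)) \<union> set (drop j cs @ take (i+1) cs)"
proof -
  let ?n = "length cs"
  let ?c1 = "take (j-i+1) (drop i cs)"
  let ?c2 = "drop j cs @ take (i+1) cs"
  have sym: "\<And>x y. E x y \<Longrightarrow> E y x" using sg unfolding simple_graph_def by blast
  have d: "distinct cs" and w: "successively E cs" and cl: "E (last cs) (hd cs)"
    and n3: "3 \<le> ?n" using c unfolding lcycle_def by auto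
  have ne: "cs \<noteq> []" using n3 by auto
  have len1: "length ?c1 = j - i + 1" using ij by simp
  have len2: "length ?c2 = ?n - j + i + 1" using ij by simp
  have hd1: "hd ?c1 = cs ! i" using ij by (simp add: hd_conv_nth)
  have last1: "last ?c1 = cs ! j" using ij by (simp add: last_conv_nth)
  have w1: "successively E ?c1" using w
    by (metis append_take_drop_id successively_append_iff)
  have wa: "successively E (drop j cs)" using w
    by (metis append_take_drop_id successively_append_iff)
  have wb: "successively E (take (i+1) cs)" using w
    by (metis append_take_drop_id successively_append_iff)
  have lasta: "last (drop j cs) = last cs" using ij by simp
  have hdb: "hd (take (i+1) cs) = hd cs" using ne by simp
  have hda: "hd (drop j cs) = cs ! j" using ij by (simp add: hd_drop_conv_nth)
  have lastb: "last (take (i+1) cs) = cs ! i" using ij by (subst last_conv_nth) auto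
  have w2: "successively E ?c2" using wa wb cl lasta hdb
    by (simp add: successively_append_iff)
  have hd2: "hd ?c2 = cs ! j" using ij hda by simp
  have last2: "last ?c2 = cs ! i" using lastb ne by (simp add: last_append)
  have d1: "distinct ?c1" using d by simp
  have d2: "distinct ?c2" using d ij
    using set_take_disj_set_drop_if_distinct[OF d, of "Suc i" j] by (auto simp: Int_commute)
  have cov: "set cs \<subseteq> set ?c1 \<union> set ?c2"
  proof
    fix x assume "x \<in> set cs"
    then obtain k where k: "k < ?n" "x = cs ! k" by (auto simp: in_set_conv_nth)
    show "x \<in> set ?c1 \<union> set ?c2"
    proof (cases "k \<le> i")
      case True
      then have "x \<in> set (take (i+1) cs)" using k by (auto simp: in_set_conv_nth intro!: exI[of _ k])
      then show ?thesis by simp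
    next
      case False
      show ?thesis
      proof (cases "k \<le> j")
        case True
        then have "x = ?c1 ! (k - i)" using k False by simp
        moreover have "k - i < length ?c1" using True False len1 by simp
        ultimately show ?thesis by (metis UnI1 nth_mem)
      next
        case False
        then have "x = drop j cs ! (k - j)" using k by simp
        moreover have "k - j < length (drop j cs)" using False k by simp
        ultimately have "x \<in> set (drop j cs)" by (metis nth_mem)
        then show ?thesis by simp
      qed
    qed
  qed
  show ?thesis unfolding lcycle_def
    using len1 len2 hd1 last1 hd2 last2 w1 w2 d1 d2 cov ch ij sym by auto
qed

lemma lcycle_is_cycle:
  assumes sg: "simple_graph V E" and c: "lcycle E cs"
    and chl: "\<forall>i<length cs. \<forall>j<length cs. E (cs!i) (cs!j) \<longrightarrow>
       (int i - int j) mod int (length cs) \<in> {0, 1, int (length cs) - 1}"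
  shows "is_cycle V E (length cs) (\<lambda>k. cs ! (k mod length cs))"
proof -
  let ?n = "length cs"
  let ?x = "\<lambda>k. cs ! (k mod ?n)"
  have d: "distinct cs" and w: "successively E cs" and cl: "E (last cs) (hd cs)"
    and n3: "3 \<le> ?n" using c unfolding lcycle_def by auto
  have ne: "cs \<noteq> []" using n3 by auto
  have EV: "\<And>a b. E a b \<Longrightarrow> a \<in> V \<and> b \<in> V" using sg unfolding simple_graph_def by blast
  have inV: "\<And>y. y \<in> set cs \<Longrightarrow> y \<in> V"
  proof -
    fix y assume "y \<in> set cs"
    then obtain k where k: "k < ?n" "y = cs ! k" by (auto simp: in_set_conv_nth)
    show "y \<in> V"
    proof (cases "Suc k < ?n")
      case True
      then have "E (cs!k) (cs!Suc k)" by (rule successively_nth[OF w])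
      then show ?thesis using EV k(2) by simp
    next
      case False
      then have "k = ?n - 1" using k by simp
      then have "cs ! k = last cs" using ne by (simp add: last_conv_nth)
      then show ?thesis using EV[OF cl] k(2) by simp
    qed
  qed
  have 1: "\<forall>i\<le>?n. ?x i \<in> V"
  proof (intro allI impI)
    fix i
    have "i mod ?n < ?n" using ne by simp
    then show "?x i \<in> V" using inV nth_mem by blast
  qed
  have 2: "\<forall>i<?n. E (?x i) (?x (Suc i))"
  proof (intro allI impI)
    fix i assume i: "i < ?n"
    show "E (?x i) (?x (Suc i))"
    proof (cases "Suc i < ?n")
      case True
      then show ?thesis using successively_nth[OF w True] i by simp
    next
      case False
      then have "Suc i = ?n" using i by simp
      then have "i = ?n - 1" by simp
      then show ?thesis using cl ne \<open>Suc i = ?n\<close> by (simp add: last_conv_nth hd_conv_nth)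
    qed
  qed
  have 3: "inj_on ?x {..<?n}"
  proof (rule inj_onI)
    fix a b assume ab: "a \<in> {..<?n}" "b \<in> {..<?n}" "?x a = ?x b"
    then have "cs ! a = cs ! b" by simp
    then show "a = b" using ab d nth_eq_iff_index_eq by auto
  qed
  have 4: "\<forall>i\<le>?n. \<forall>j\<le>?n. E (?x i) (?x j) \<longrightarrow> (int i - int j) mod int ?n \<in> {0, 1, int ?n - 1}"
  proof (intro allI impI)
    fix i j assume "i \<le> ?n" "j \<le> ?n" "E (?x i) (?x j)"
    then have "(int (i mod ?n) - int (j mod ?n)) mod int ?n \<in> {0, 1, int ?n - 1}"
      using chl ne by auto
    moreover have "(int (i mod ?n) - int (j mod ?n)) mod int ?n = (int i - int j) mod int ?n"
      by (simp add: zmod_int mod_diff_eq)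
    ultimately show "(int i - int j) mod int ?n \<in> {0, 1, int ?n - 1}" by simp
  qed
  show ?thesis unfolding is_cycle_def using n3 1 2 3 4 by simp
qed

lemma lcycle_image:
  assumes "cs \<noteq> []"
  shows "set cs \<subseteq> (\<lambda>k. cs ! (k mod length cs)) ` {0..length cs}"
proof
  fix y assume "y \<in> set cs"
  then obtain k where k: "k < length cs" "y = cs ! k" by (auto simp: in_set_conv_nth)
  then show "y \<in> (\<lambda>k. cs ! (k mod length cs)) ` {0..length cs}"
    by (intro image_eqI[of _ _ k]) auto
qed

lemma chord_arith1:
  assumes "i < j" "j < n" "(int i - int j) mod int n \<notin> {0, 1, int n - 1}"
  shows "2 \<le> j - i \<and> j - i \<noteq> n - 1"
proof -
  have "(int i - int j) mod int n = int i - int j + int n"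
  proof -
    have "(int i - int j) mod int n = (int i - int j + int n) mod int n" by simp
    also have "\<dots> = int i - int j + int n" using assms(1,2) by (intro mod_pos_pos_trivial) auto
    finally show ?thesis .
  qed
  then show ?thesis using assms by auto
qed

lemma chord_arith2:
  assumes "j < i" "i < n" "(int i - int j) mod int n \<notin> {0, 1, int n - 1}"
  shows "2 \<le> i - j \<and> i - j \<noteq> n - 1"
proof -
  have "(int i - int j) mod int n = int i - int j"
    using assms(1,2) by (intro mod_pos_pos_trivial) auto
  then show ?thesis using assms by auto
qed

lemma lcycle_in_core:
  assumes sg: "simple_graph V E" and cyc: "\<forall>n x. is_cycle V E n x \<longrightarrow> x ` {0..n} \<subseteq> I"
  shows "lcycle E cs \<Longrightarrow> set cs \<subseteq> I"
proof (induction "length cs" arbitrary: cs rule: less_induct)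
  case less
  have sym: "\<And>x y. E x y \<Longrightarrow> E y x" and irr: "\<And>x. \<not> E x x"
    using sg unfolding simple_graph_def by blast+
  let ?n = "length cs"
  have ne: "cs \<noteq> []" using less.prems unfolding lcycle_def by auto
  show ?case
  proof (cases "\<forall>i<?n. \<forall>j<?n. E (cs!i) (cs!j) \<longrightarrow>
       (int i - int j) mod int ?n \<in> {0, 1, int ?n - 1}")
    case True
    from lcycle_is_cycle[OF sg less.prems True] cyc lcycle_image[OF ne]
    show ?thesis by blast
  next
    case False
    then obtain i j where ij: "i < ?n" "j < ?n" "E (cs!i) (cs!j)"
      "(int i - int j) mod int ?n \<notin> {0, 1, int ?n - 1}" by blast
    have "\<exists>a b. a < b \<and> b < ?n \<and> E (cs!a) (cs!b) \<and> 2 \<le> b - a \<and> b - a \<noteq> ?n - 1"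
    proof (cases "i < j")
      case True
      then show ?thesis using chord_arith1[OF True ij(2,4)] ij by blast
    next
      case False
      have "i \<noteq> j" using ij(3) irr by auto
      then have "j < i" using False by simp
      then show ?thesis using chord_arith2[OF _ ij(1,4)] ij sym by blast
    qed
    then obtain a b where ab: "a < b" "b < ?n" "E (cs!a) (cs!b)" "2 \<le> b - a" "b - a \<noteq> ?n - 1"
      by blast
    note sp = lcycle_split[OF sg less.prems ab]
    then show ?thesis using less.hyps by blast
  qed
qed

lemma path_in_core:
  assumes sg: "simple_graph V E" and pc: "pre_cycle_core V E I"
    and p: "p \<noteq> []" "successively E p" "distinct p" "hd p \<in> I" "last p \<in> I"
  shows "set p \<subseteq> I"
proof (rule ccontr)
  assume nsub: "\<not> set p \<subseteq> I"
  define as where "as = takeWhile (\<lambda>x. x \<in> I) p"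
  define r0 where "r0 = dropWhile (\<lambda>x. x \<in> I) p"
  have pr0: "p = as @ r0" unfolding as_def r0_def by simp
  have asI: "set as \<subseteq> I" unfolding as_def by (auto dest: set_takeWhileD)
  have "r0 \<noteq> []" using nsub asI pr0 by auto
  then obtain w rest where r0: "r0 = w # rest" by (cases r0) auto
  have wI: "w \<notin> I" using r0 unfolding r0_def
    by (metis hd_dropWhile list.distinct(1) list.sel(1))
  have asne: "as \<noteq> []" using p(1,4) unfolding as_def by (cases p) auto
  define ws where "ws = takeWhile (\<lambda>x. x \<notin> I) rest"
  define r2 where "r2 = dropWhile (\<lambda>x. x \<notin> I) rest"
  have rr: "rest = ws @ r2" unfolding ws_def r2_def by simp
  have wsI: "set ws \<inter> I = {}" unfolding ws_def by (auto dest: set_takeWhileD)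
  have "r2 \<noteq> []"
  proof
    assume "r2 = []"
    then have "last p = last (w # ws)" using pr0 r0 rr by simp
    then show False using p(5) wI wsI
      by (metis disjoint_iff last_in_set list.distinct(1) set_ConsD)
  qed
  then obtain v bs where r2: "r2 = v # bs" by (cases r2) auto
  have vI: "v \<in> I" using r2 unfolding r2_def
    by (metis hd_dropWhile list.distinct(1) list.sel(1))
  have pdec: "p = as @ (w # ws) @ (v # bs)" using pr0 r0 rr r2 by simp
  define u where "u = last as"
  have uI: "u \<in> I" using asI asne unfolding u_def by auto
  have wE: "successively E (as @ (w # ws) @ (v # bs))" using p(2) pdec by simp
  have A: "successively E ((w # ws) @ (v # bs))" and Euw: "E u w"
    using wE successively_append_iff[of E as "(w # ws) @ (v # bs)"] asne unfolding u_def by auto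
  have Ev: "E (last (w # ws)) v" and wws: "successively E (w # ws)"
    using A successively_append_iff[of E "w # ws" "v # bs"] by auto
  have dp: "distinct (as @ (w # ws) @ (v # bs))" using p(3) pdec by simp
  have uv: "u \<noteq> v" using dp asne unfolding u_def by auto
  have dws: "distinct (w # ws)" using dp by simp
  have conn: "connected_on V E I" using pc unfolding pre_cycle_core_def by blast
  then have allc: "\<forall>x\<in>I. \<forall>y\<in>I. (\<lambda>a b. a \<in> I \<and> b \<in> I \<and> E a b)\<^sup>*\<^sup>* x y"
    unfolding connected_on_def by blast
  have rt: "(\<lambda>a b. a \<in> I \<and> b \<in> I \<and> E a b)\<^sup>*\<^sup>* v u"
    using allc uI vI by blast
  obtain q0 where q0: "q0 \<noteq> []" "hd q0 = v" "last q0 = u"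
    "successively (\<lambda>a b. a \<in> I \<and> b \<in> I \<and> E a b) q0"
    using rtranclp_walk[OF rt] by blast
  obtain q where q': "q \<noteq> []" "hd q = hd q0" "last q = last q0"
    "successively (\<lambda>a b. a \<in> I \<and> b \<in> I \<and> E a b) q" "distinct q"
    using walk_distinct[OF q0(1,4)] by blast
  have q: "q \<noteq> []" "hd q = v" "last q = u"
    "successively (\<lambda>a b. a \<in> I \<and> b \<in> I \<and> E a b) q" "distinct q"
    using q' q0 by simp_all
  have qI: "set q \<subseteq> I" using walk_set[OF q(4) q(1)] q(2) vI by simp
  have qE: "successively E q" using q(4) by (rule successively_mono) auto
  have lq: "2 \<le> length q"
  proof (rule ccontr)
    assume "\<not> 2 \<le> length q"
    then obtain z where "q = [z]" using q(1) by (cases q rule: remdups_adj.cases) auto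
    then show False using q(2,3) uv by simp
  qed
  let ?cs = "(w # ws) @ q"
  have "lcycle E ?cs" unfolding lcycle_def
  proof (intro conjI)
    show "3 \<le> length ?cs" using lq by simp
    show "distinct ?cs" using dws q(5) qI wI wsI by auto
    show "successively E ?cs" using wws qE Ev q(1,2) successively_append_iff[of E "w # ws" q] by simp
    show "E (last ?cs) (hd ?cs)" using q(1,3) Euw by simp
  qed
  then have "set ?cs \<subseteq> I"
    using lcycle_in_core[OF sg] pc unfolding pre_cycle_core_def by blast
  then show False using wI by simp
qed

lemma inter_core:
  assumes sg: "simple_graph V E" and cV: "connected_on V E V" and hc: "has_cycle V E"
    and F: "\<forall>I\<in>F. pre_cycle_core V E I"
  shows "pre_cycle_core V E (V \<inter> \<Inter>F)"
proof -
  let ?S = "V \<inter> \<Inter>F"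
  obtain n x where cx: "is_cycle V E n x" using hc unfolding has_cycle_def by blast
  have cycS: "\<forall>n x. is_cycle V E n x \<longrightarrow> x ` {0..n} \<subseteq> ?S"
  proof (intro allI impI)
    fix n x assume c: "is_cycle V E n x"
    then have "x ` {0..n} \<subseteq> V" unfolding is_cycle_def by auto
    moreover have "x ` {0..n} \<subseteq> I" if "I \<in> F" for I
    proof -
      have "pre_cycle_core V E I" using F that by blast
      then have "\<forall>n x. is_cycle V E n x \<longrightarrow> x ` {0..n} \<subseteq> I" unfolding pre_cycle_core_def by blast
      then show ?thesis using c by blast
    qed
    ultimately show "x ` {0..n} \<subseteq> ?S" by blast
  qed
  have "x ` {0..n} \<subseteq> ?S" using cycS cx by blast
  moreover have "x 0 \<in> x ` {0..n}" by simp
  ultimately have "x 0 \<in> ?S" by (rule subsetD)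
  then have neS: "?S \<noteq> {}" by blast
  have pathS: "(\<lambda>u v. u \<in> ?S \<and> v \<in> ?S \<and> E u v)\<^sup>*\<^sup>* a b" if ab: "a \<in> ?S" "b \<in> ?S" for a b
  proof -
    have allc: "\<forall>x\<in>V. \<forall>y\<in>V. (\<lambda>u v. u \<in> V \<and> v \<in> V \<and> E u v)\<^sup>*\<^sup>* x y"
      using cV unfolding connected_on_def by blast
    have aV: "a \<in> V" "b \<in> V" using ab by auto
    have rt: "(\<lambda>u v. u \<in> V \<and> v \<in> V \<and> E u v)\<^sup>*\<^sup>* a b"
      using allc aV by blast
    obtain p0 where p0: "p0 \<noteq> []" "hd p0 = a" "last p0 = b"
      "successively (\<lambda>u v. u \<in> V \<and> v \<in> V \<and> E u v) p0"
      using rtranclp_walk[OF rt] by blast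
    obtain p where p': "p \<noteq> []" "hd p = hd p0" "last p = last p0"
      "successively (\<lambda>u v. u \<in> V \<and> v \<in> V \<and> E u v) p" "distinct p"
      using walk_distinct[OF p0(1,4)] by blast
    have p: "p \<noteq> []" "hd p = a" "last p = b"
      "successively (\<lambda>u v. u \<in> V \<and> v \<in> V \<and> E u v) p" "distinct p"
      using p' p0 by simp_all
    have pV: "set p \<subseteq> V" using walk_set[OF p(4) p(1)] p(2) aV by simp
    have pE: "successively E p" using p(4) by (rule successively_mono) auto
    have "set p \<subseteq> I" if "I \<in> F" for I
    proof -
      have pc: "pre_cycle_core V E I" using F that by blast
      have "a \<in> I" "b \<in> I" using ab that by auto
      then show ?thesis using path_in_core[OF sg pc p(1) pE p(5)] p(2,3) by simp
    qed
    then have pS: "set p \<subseteq> ?S" using pV by blast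
    have "successively (\<lambda>u v. u \<in> ?S \<and> v \<in> ?S \<and> E u v) p"
      using pE by (rule successively_mono) (use pS in blast)
    from walk_rtranclp[OF this p(1)] p(2,3) show ?thesis by simp
  qed
  show ?thesis unfolding pre_cycle_core_def connected_on_def
    using neS pathS cycS by blast
qed

theorem lemma2p4:
  fixes V :: "'a set" and E :: "'a \<Rightarrow> 'a \<Rightarrow> bool"
  assumes "simple_graph V E" and "connected_on V E V" and "has_cycle V E"
  shows "(\<forall>\<F>. (\<forall>I\<in>\<F>. pre_cycle_core V E I) \<longrightarrow> pre_cycle_core V E (V \<inter> \<Inter>\<F>))
    \<and> (\<exists>!I. pre_cycle_core V E I \<and> (\<forall>J. pre_cycle_core V E J \<and> J \<subseteq> I \<longrightarrow> J = I))"
proof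
  show P1: "\<forall>\<F>. (\<forall>I\<in>\<F>. pre_cycle_core V E I) \<longrightarrow> pre_cycle_core V E (V \<inter> \<Inter>\<F>)"
    using inter_core[OF assms] by blast
  let ?I0 = "V \<inter> \<Inter>{I. pre_cycle_core V E I}"
  have I0: "pre_cycle_core V E ?I0" using P1 by blast
  have low: "\<And>J. pre_cycle_core V E J \<Longrightarrow> ?I0 \<subseteq> J" by blast
  show "\<exists>!I. pre_cycle_core V E I \<and> (\<forall>J. pre_cycle_core V E J \<and> J \<subseteq> I \<longrightarrow> J = I)"
  proof (rule ex1I[of _ ?I0])
    show "pre_cycle_core V E ?I0 \<and> (\<forall>J. pre_cycle_core V E J \<and> J \<subseteq> ?I0 \<longrightarrow> J = ?I0)"
      using I0 low by blast
  next
    fix I assume "pre_cycle_core V E I \<and> (\<forall>J. pre_cycle_core V E J \<and> J \<subseteq> I \<longrightarrow> J = I)"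
    then show "I = ?I0" using I0 low by blast
  qed
qed

end
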